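(* Let $(\mathcal{B},\mathcal{B}',\langle\cdot,\cdot\rangle,k)$ be an RKBS with kernel on a set $X$ such that $\{k(x,\cdot):x\in X\}$ is linearly independent, and let $(\varphi_t)_{t\ge0}$ be a semiflow on $X$ with Koopman semigroup $(U_t)_{t\ge0}$. For $t\ge0$ define $K_t:\mathrm{Span}\{k(x,\cdot):x\in X\}\to\mathrm{Span}\{k(x,\cdot):x\in X\}$ as the linear extension of $K_tk(x,\cdot):=k(\varphi_t(x),\cdot)$. Then $(K_t)_{t\ge0}$ is a well-defined family of linear operators and $K_t'=U_t$ for all $t\ge0$.
   Context: An RKBS with kernel on $X$: $(\mathcal{B},\mathcal{B}',\langle\cdot,\cdot\rangle,k)$ with $\mathcal{B},\mathcal{B}'$ Banach spaces of functions on $X$ (pointwise operations), continuous point evaluations on $\mathcal{B}$, $\langle\cdot,\cdot\rangle:\mathcal{B}\times\mathcal{B}'\to\mathbb{C}$ continuous bilinear, $k(x,\cdot)\in\mathcal{B}'$ and $g(x)=\langle g,k(x,\cdot)\rangle$ for all $g\in\mathcal{B}$, $x\in X$. A semiflow is a family of maps $\varphi_t:X\to X$, $t\ge0$, with $\varphi_0=\mathrm{id}$ and $\varphi_{t+s}=\varphi_t\circ\varphi_s$. Koopman semigroup: $U_tg:=g\circ\varphi_t$ on $D(U_t):=\{g\in\mathcal{B}:g\circ\varphi_t\in\mathcal{B}\}$. For an operator $T:D(T)\subset\mathcal{B}'\to\mathcal{B}'$ whose domain is dense w.r.t. $\langle\cdot,\cdot\rangle$ (i.e. $g\in\mathcal{B}$,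 $\langle g,h\rangle=0$ for all $h\in D(T)$ imply $g=0$), the adjoint $T':D(T')\subset\mathcal{B}\to\mathcal{B}$ is given by $D(T')=\{g\in\mathcal{B}:\exists z\in\mathcal{B},\ \langle g,Th\rangle=\langle z,h\rangle\ \forall h\in D(T)\}$, $T'g:=z$. *)

theory Defs
  imports "HOL-Analysis.Analysis"
begin

definition fun_subspace :: "('x \<Rightarrow> complex) set \<Rightarrow> bool" where
  "fun_subspace B \<longleftrightarrow> (\<lambda>_. 0) \<in> B \<and>
     (\<forall>f\<in>B. \<forall>g\<in>B. (\<lambda>y. f y + g y) \<in> B) \<and>
     (\<forall>c. \<forall>f\<in>B. (\<lambda>y. c * f y) \<in> B)"

definition norm_on :: "('x \<Rightarrow> complex) set \<Rightarrow> (('x \<Rightarrow> complex) \<Rightarrow> real) \<Rightarrow> bool" where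
  "norm_on B n \<longleftrightarrow>
     (\<forall>f\<in>B. n f \<ge> 0) \<and> (\<forall>f\<in>B. n f = 0 \<longleftrightarrow> f = (\<lambda>_. 0)) \<and>
     (\<forall>c. \<forall>f\<in>B. n (\<lambda>y. c * f y) = cmod c * n f) \<and>
     (\<forall>f\<in>B. \<forall>g\<in>B. n (\<lambda>y. f y + g y) \<le> n f + n g)"

definition complete_wrt :: "('x \<Rightarrow> complex) set \<Rightarrow> (('x \<Rightarrow> complex) \<Rightarrow> real) \<Rightarrow> bool" where
  "complete_wrt B n \<longleftrightarrow>
     (\<forall>s::nat \<Rightarrow> ('x \<Rightarrow> complex). (\<forall>i. s i \<in> B) \<and>
        (\<forall>e>0. \<exists>N. \<forall>i\<ge>N. \<forall>j\<ge>N. n (\<lambda>y. s i y - s j y) < e)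
      \<longrightarrow> (\<exists>f\<in>B. (\<lambda>i. n (\<lambda>y. s i y - f y)) \<longlonglongrightarrow> 0))"

definition banach_fun_space :: "('x \<Rightarrow> complex) set \<Rightarrow> (('x \<Rightarrow> complex) \<Rightarrow> real) \<Rightarrow> bool" where
  "banach_fun_space B n \<longleftrightarrow> fun_subspace B \<and> norm_on B n \<and> complete_wrt B n"

definition rkbs ::
  "('x \<Rightarrow> complex) set \<Rightarrow> (('x \<Rightarrow> complex) \<Rightarrow> real) \<Rightarrow>
   ('x \<Rightarrow> complex) set \<Rightarrow> (('x \<Rightarrow> complex) \<Rightarrow> real) \<Rightarrow>
   (('x \<Rightarrow> complex) \<Rightarrow> ('x \<Rightarrow> complex) \<Rightarrow> complex) \<Rightarrow> ('x \<Rightarrow> 'x \<Rightarrow> complex) \<Rightarrow> bool" where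
  "rkbs B nB B' nB' pair k \<longleftrightarrow>
     banach_fun_space B nB \<and> banach_fun_space B' nB' \<and>
     \<comment> \<open>continuous point evaluations on B\<close>
     (\<forall>x. \<exists>C. \<forall>g\<in>B. cmod (g x) \<le> C * nB g) \<and>
     \<comment> \<open>bilinear pairing\<close>
     (\<forall>h\<in>B'. \<forall>f\<in>B. \<forall>g\<in>B. pair (\<lambda>y. f y + g y) h = pair f h + pair g h) \<and>
     (\<forall>h\<in>B'. \<forall>c. \<forall>f\<in>B. pair (\<lambda>y. c * f y) h = c * pair f h) \<and>
     (\<forall>g\<in>B. \<forall>h\<in>B'. \<forall>h'\<in>B'. pair g (\<lambda>y. h y + h' y) = pair g h + pair g h') \<and>
     (\<forall>g\<in>B. \<forall>c. \<forall>h\<in>B'. pair g (\<lambda>y. c * h y) = c * pair g h) \<and>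
     \<comment> \<open>continuity of the pairing\<close>
     (\<exists>C. \<forall>g\<in>B. \<forall>h\<in>B'. cmod (pair g h) \<le> C * nB g * nB' h) \<and>
     \<comment> \<open>reproducing property\<close>
     (\<forall>x. k x \<in> B') \<and>
     (\<forall>g\<in>B. \<forall>x. g x = pair g (k x))"

definition kspan :: "('x \<Rightarrow> 'x \<Rightarrow> complex) \<Rightarrow> ('x \<Rightarrow> complex) set" where
  "kspan k = {h. \<exists>F c. finite F \<and> h = (\<lambda>y. \<Sum>x\<in>F. c x * k x y)}"

definition kernel_lin_indep :: "('x \<Rightarrow> 'x \<Rightarrow> complex) \<Rightarrow> bool" where
  "kernel_lin_indep k \<longleftrightarrow>
     (\<forall>F c. finite F \<and> (\<forall>y. (\<Sum>x\<in>F. c x * k x y) = 0) \<longrightarrow> (\<forall>x\<in>F. c x = 0))"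

definition semiflow :: "(real \<Rightarrow> 'x \<Rightarrow> 'x) \<Rightarrow> bool" where
  "semiflow \<phi> \<longleftrightarrow> \<phi> 0 = id \<and> (\<forall>t\<ge>0. \<forall>s\<ge>0. \<phi> (t + s) = \<phi> t \<circ> \<phi> s)"

definition koopman_dom :: "('x \<Rightarrow> complex) set \<Rightarrow> (real \<Rightarrow> 'x \<Rightarrow> 'x) \<Rightarrow> real \<Rightarrow> ('x \<Rightarrow> complex) set" where
  "koopman_dom B \<phi> t = {g \<in> B. g \<circ> \<phi> t \<in> B}"

definition koopman :: "(real \<Rightarrow> 'x \<Rightarrow> 'x) \<Rightarrow> real \<Rightarrow> ('x \<Rightarrow> complex) \<Rightarrow> ('x \<Rightarrow> complex)" where
  "koopman \<phi> t g = g \<circ> \<phi> t"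

definition linear_op_on :: "('x \<Rightarrow> complex) set \<Rightarrow> (('x \<Rightarrow> complex) \<Rightarrow> ('x \<Rightarrow> complex)) \<Rightarrow> bool" where
  "linear_op_on D T \<longleftrightarrow> (\<forall>h\<in>D. T h \<in> D) \<and>
     (\<forall>h\<in>D. \<forall>h'\<in>D. T (\<lambda>y. h y + h' y) = (\<lambda>y. T h y + T h' y)) \<and>
     (\<forall>c. \<forall>h\<in>D. T (\<lambda>y. c * h y) = (\<lambda>y. c * T h y))"

definition adjoint_dom ::
  "('x \<Rightarrow> complex) set \<Rightarrow> (('x \<Rightarrow> complex) \<Rightarrow> ('x \<Rightarrow> complex) \<Rightarrow> complex) \<Rightarrow>
   ('x \<Rightarrow> complex) set \<Rightarrow> (('x \<Rightarrow> complex) \<Rightarrow> ('x \<Rightarrow> complex)) \<Rightarrow> ('x \<Rightarrow> complex) set" where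
  "adjoint_dom B pair D T = {g \<in> B. \<exists>z\<in>B. \<forall>h\<in>D. pair g (T h) = pair z h}"

definition adjoint ::
  "('x \<Rightarrow> complex) set \<Rightarrow> (('x \<Rightarrow> complex) \<Rightarrow> ('x \<Rightarrow> complex) \<Rightarrow> complex) \<Rightarrow>
   ('x \<Rightarrow> complex) set \<Rightarrow> (('x \<Rightarrow> complex) \<Rightarrow> ('x \<Rightarrow> complex)) \<Rightarrow>
   ('x \<Rightarrow> complex) \<Rightarrow> ('x \<Rightarrow> complex)" where
  "adjoint B pair D T g = (THE z. z \<in> B \<and> (\<forall>h\<in>D. pair g (T h) = pair z h))"

definition pairing_dense :: "('x \<Rightarrow> complex) set \<Rightarrow> (('x \<Rightarrow> complex) \<Rightarrow> ('x \<Rightarrow> complex) \<Rightarrow> complex) \<Rightarrow>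
   ('x \<Rightarrow> complex) set \<Rightarrow> bool" where
  "pairing_dense B pair D \<longleftrightarrow> (\<forall>g\<in>B. (\<forall>h\<in>D. pair g h = 0) \<longrightarrow> g = (\<lambda>_. 0))"

end

theory Submission
  imports Defs
begin

lemma pad_sum:
  fixes c :: "'x \<Rightarrow> complex" and m :: "'x \<Rightarrow> 'x \<Rightarrow> complex"
  assumes "finite H" "F \<subseteq> H"
  shows "(\<Sum>x\<in>F. c x * m x y) = (\<Sum>x\<in>H. (if x \<in> F then c x else 0) * m x y)"
proof -
  have "(\<Sum>x\<in>H. (if x \<in> F then c x else 0) * m x y) = (\<Sum>x\<in>F. (if x \<in> F then c x else 0) * m x y)"
    by (rule sum.mono_neutral_right) (use assms in auto)
  also have "\<dots> = (\<Sum>x\<in>F. c x * m x y)" by (rule sum.cong) auto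
  finally show ?thesis by simp
qed

lemma rep_unique:
  fixes c d :: "'x \<Rightarrow> complex" and m k :: "'x \<Rightarrow> 'x \<Rightarrow> complex"
  assumes li: "kernel_lin_indep k" and fF: "finite F" and fG: "finite G"
    and eq: "(\<lambda>y. \<Sum>x\<in>F. c x * k x y) = (\<lambda>y. \<Sum>x\<in>G. d x * k x y)"
  shows "(\<lambda>y. \<Sum>x\<in>F. c x * m x y) = (\<lambda>y. \<Sum>x\<in>G. d x * m x y)"
proof -
  define c' where "c' x = (if x \<in> F then c x else 0)" for x
  define d' where "d' x = (if x \<in> G then d x else 0)" for x
  have fH: "finite (F \<union> G)" using fF fG by simp
  have pc: "(\<Sum>x\<in>F. c x * m' x y) = (\<Sum>x\<in>F \<union> G. c' x * m' x y)" for m' :: "'x \<Rightarrow> 'x \<Rightarrow> complex" and y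
    unfolding c'_def by (rule pad_sum[OF fH]) auto
  have pd: "(\<Sum>x\<in>G. d x * m' x y) = (\<Sum>x\<in>F \<union> G. d' x * m' x y)" for m' :: "'x \<Rightarrow> 'x \<Rightarrow> complex" and y
    unfolding d'_def by (rule pad_sum[OF fH]) auto
  have "\<forall>y. (\<Sum>x\<in>F \<union> G. (c' x - d' x) * k x y) = 0"
  proof
    fix y
    have "(\<Sum>x\<in>F \<union> G. (c' x - d' x) * k x y) = (\<Sum>x\<in>F \<union> G. c' x * k x y) - (\<Sum>x\<in>F \<union> G. d' x * k x y)"
      by (simp add: left_diff_distrib sum_subtractf)
    also have "\<dots> = 0" using pc[of k y] pd[of k y] fun_cong[OF eq, of y] by simp
    finally show "(\<Sum>x\<in>F \<union> G. (c' x - d' x) * k x y) = 0" .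
  qed
  then have z: "\<forall>x\<in>F \<union> G. c' x - d' x = 0"
    using spec[OF spec[OF li[unfolded kernel_lin_indep_def]], of "F \<union> G" "\<lambda>x. c' x - d' x"] fH by simp
  show ?thesis
  proof
    fix y
    have "(\<Sum>x\<in>F \<union> G. c' x * m x y) = (\<Sum>x\<in>F \<union> G. d' x * m x y)"
      by (rule sum.cong) (use z in auto)
    then show "(\<Sum>x\<in>F. c x * m x y) = (\<Sum>x\<in>G. d x * m x y)" using pc[of m y] pd[of m y] by simp
  qed
qed

definition Kop :: "('x \<Rightarrow> 'x \<Rightarrow> complex) \<Rightarrow> ('x \<Rightarrow> 'x \<Rightarrow> complex) \<Rightarrow> ('x \<Rightarrow> complex) \<Rightarrow> ('x \<Rightarrow> complex)" where
  "Kop k m h = (let R = (SOME R. finite (fst R) \<and> h = (\<lambda>y. \<Sum>x\<in>fst R. snd R x * k x y))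
     in (\<lambda>y. \<Sum>x\<in>fst R. snd R x * m x y))"

lemma Kop_rep:
  assumes li: "kernel_lin_indep k" and fF: "finite F"
  shows "Kop k m (\<lambda>y. \<Sum>x\<in>F. c x * k x y) = (\<lambda>y. \<Sum>x\<in>F. c x * m x y)"
proof -
  define P where "P R = (finite (fst R) \<and> (\<lambda>y. \<Sum>x\<in>F. c x * k x y) = (\<lambda>y. \<Sum>x\<in>fst R. snd R x * k x y))"
    for R :: "'a set \<times> ('a \<Rightarrow> complex)"
  have "P (F, c)" unfolding P_def using fF by simp
  then have "P (SOME R. P R)" by (rule someI)
  then have fR: "finite (fst (SOME R. P R))"
    and eR: "(\<lambda>y. \<Sum>x\<in>F. c x * k x y) = (\<lambda>y. \<Sum>x\<in>fst (SOME R. P R). snd (SOME R. P R) x * k x y)"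
    unfolding P_def by auto
  have "(\<lambda>y. \<Sum>x\<in>F. c x * m x y) = (\<lambda>y. \<Sum>x\<in>fst (SOME R. P R). snd (SOME R. P R) x * m x y)"
    by (rule rep_unique[OF li fF fR eR])
  then show ?thesis unfolding Kop_def P_def Let_def by simp
qed

lemma kspan_image:
  fixes c :: "'x \<Rightarrow> complex"
  assumes "finite F"
  shows "(\<lambda>y. \<Sum>x\<in>F. c x * k (f x) y) \<in> kspan k"
proof -
  have "(\<lambda>y. \<Sum>x\<in>F. c x * k (f x) y) = (\<lambda>y. \<Sum>z\<in>f ` F. (\<Sum>x\<in>{x\<in>F. f x = z}. c x) * k z y)"
  proof
    fix y
    have "(\<Sum>x\<in>F. c x * k (f x) y) = (\<Sum>z\<in>f ` F. \<Sum>x\<in>{x\<in>F. f x = z}. c x * k (f x) y)"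
      by (rule sum.image_gen[OF assms])
    also have "\<dots> = (\<Sum>z\<in>f ` F. (\<Sum>x\<in>{x\<in>F. f x = z}. c x) * k z y)"
    proof (rule sum.cong[OF refl])
      fix z
      have "(\<Sum>x\<in>{x\<in>F. f x = z}. c x * k (f x) y) = (\<Sum>x\<in>{x\<in>F. f x = z}. c x * k z y)"
        by (rule sum.cong[OF refl]) simp
      also have "\<dots> = (\<Sum>x\<in>{x\<in>F. f x = z}. c x) * k z y" by (rule sum_distrib_right[symmetric])
      finally show "(\<Sum>x\<in>{x\<in>F. f x = z}. c x * k (f x) y) = (\<Sum>x\<in>{x\<in>F. f x = z}. c x) * k z y" .
    qed
    finally show "(\<Sum>x\<in>F. c x * k (f x) y) = (\<Sum>z\<in>f ` F. (\<Sum>x\<in>{x\<in>F. f x = z}. c x) * k z y)" .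
  qed
  moreover have "finite (f ` F)" using assms by simp
  ultimately show ?thesis unfolding kspan_def
    by (intro CollectI exI[of _ "f ` F"] exI[of _ "\<lambda>z. \<Sum>x\<in>{x\<in>F. f x = z}. c x"] conjI)
qed

lemma Kop_linear:
  assumes li: "kernel_lin_indep k"
  shows "linear_op_on (kspan k) (Kop k (\<lambda>x. k (f x)))"
  unfolding linear_op_on_def
proof (intro conjI ballI allI)
  fix h assume "h \<in> kspan k"
  then obtain F c where F: "finite F" "h = (\<lambda>y. \<Sum>x\<in>F. c x * k x y)" unfolding kspan_def by blast
  show "Kop k (\<lambda>x. k (f x)) h \<in> kspan k" using F Kop_rep[OF li F(1)] kspan_image[OF F(1)] by simp
next
  fix c0 h assume "h \<in> kspan k"
  then obtain F c where F: "finite F" "h = (\<lambda>y. \<Sum>x\<in>F. c x * k x y)" unfolding kspan_def by blast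
  have "(\<lambda>y. c0 * h y) = (\<lambda>y. \<Sum>x\<in>F. (c0 * c x) * k x y)"
    using F by (simp add: sum_distrib_left mult.assoc)
  then have "Kop k (\<lambda>x. k (f x)) (\<lambda>y. c0 * h y) = (\<lambda>y. \<Sum>x\<in>F. (c0 * c x) * k (f x) y)"
    using Kop_rep[OF li F(1)] by simp
  then show "Kop k (\<lambda>x. k (f x)) (\<lambda>y. c0 * h y) = (\<lambda>y. c0 * Kop k (\<lambda>x. k (f x)) h y)"
    using F Kop_rep[OF li F(1)] by (simp add: sum_distrib_left mult.assoc)
next
  fix h h' assume "h \<in> kspan k" "h' \<in> kspan k"
  then obtain F c G d where F: "finite F" "h = (\<lambda>y. \<Sum>x\<in>F. c x * k x y)"
    and G: "finite G" "h' = (\<lambda>y. \<Sum>x\<in>G. d x * k x y)" unfolding kspan_def by blast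
  define c' where "c' x = (if x \<in> F then c x else 0)" for x
  define d' where "d' x = (if x \<in> G then d x else 0)" for x
  have fH: "finite (F \<union> G)" using F G by simp
  have pc: "(\<Sum>x\<in>F. c x * m' x y) = (\<Sum>x\<in>F \<union> G. c' x * m' x y)" for m' :: "'a \<Rightarrow> 'a \<Rightarrow> complex" and y
    unfolding c'_def by (rule pad_sum[OF fH]) auto
  have pd: "(\<Sum>x\<in>G. d x * m' x y) = (\<Sum>x\<in>F \<union> G. d' x * m' x y)" for m' :: "'a \<Rightarrow> 'a \<Rightarrow> complex" and y
    unfolding d'_def by (rule pad_sum[OF fH]) auto
  have s: "(\<Sum>x\<in>F. c x * m' x y) + (\<Sum>x\<in>G. d x * m' x y) = (\<Sum>x\<in>F \<union> G. (c' x + d' x) * m' x y)"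
    for m' :: "'a \<Rightarrow> 'a \<Rightarrow> complex" and y
    using pc[of m' y] pd[of m' y] by (simp add: distrib_right sum.distrib)
  have "(\<lambda>y. h y + h' y) = (\<lambda>y. \<Sum>x\<in>F \<union> G. (c' x + d' x) * k x y)" using F G s by simp
  then show "Kop k (\<lambda>x. k (f x)) (\<lambda>y. h y + h' y) = (\<lambda>y. Kop k (\<lambda>x. k (f x)) h y + Kop k (\<lambda>x. k (f x)) h' y)"
    using F G Kop_rep[OF li fH] Kop_rep[OF li F(1)] Kop_rep[OF li G(1)] s[of "\<lambda>x. k (f x)", symmetric] by simp
qed

lemma lin_sum:
  assumes lin: "linear_op_on (kspan k) K" and fF: "finite F"
  shows "K (\<lambda>y. \<Sum>x\<in>F. c x * k x y) = (\<lambda>y. \<Sum>x\<in>F. c x * K (k x) y)"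
  using fF
proof (induction F rule: finite_induct)
  case empty
  have z: "(\<lambda>_. 0::complex) \<in> kspan k" unfolding kspan_def by (rule CollectI, rule exI[of _ "{}"]) auto
  have sc: "\<forall>c. \<forall>h\<in>kspan k. K (\<lambda>y. c * h y) = (\<lambda>y. c * K h y)" using lin unfolding linear_op_on_def by blast
  show ?case using sc[rule_format, where c=0 and h="\<lambda>_. 0"] z by simp
next
  case (insert a F)
  have ka: "k a \<in> kspan k" unfolding kspan_def
    by (rule CollectI, rule exI[of _ "{a}"], rule exI[of _ "\<lambda>_. 1"]) auto
  have sF: "(\<lambda>y. \<Sum>x\<in>F. c x * k x y) \<in> kspan k" unfolding kspan_def using insert(1) by blast
  have ca: "(\<lambda>y. c a * k a y) \<in> kspan k" unfolding kspan_def
    by (rule CollectI, rule exI[of _ "{a}"], rule exI[of _ "\<lambda>_. c a"]) auto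
  have ad: "\<forall>h\<in>kspan k. \<forall>h'\<in>kspan k. K (\<lambda>y. h y + h' y) = (\<lambda>y. K h y + K h' y)"
    using lin unfolding linear_op_on_def by blast
  have "K (\<lambda>y. \<Sum>x\<in>insert a F. c x * k x y) = K (\<lambda>y. c a * k a y + (\<Sum>x\<in>F. c x * k x y))"
    using insert by simp
  also have "\<dots> = (\<lambda>y. K (\<lambda>y. c a * k a y) y + K (\<lambda>y. \<Sum>x\<in>F. c x * k x y) y)"
    using ad[rule_format, OF ca sF] by simp
  also have "K (\<lambda>y. c a * k a y) = (\<lambda>y. c a * K (k a) y)"
    using lin ka unfolding linear_op_on_def by blast
  finally show ?case using insert by simp
qed

lemma pair_sum:
  assumes r: "rkbs B nB B' nB' pair k" and g: "g \<in> B" and fF: "finite F" and m: "\<forall>x. m x \<in> B'"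
  shows "pair g (\<lambda>y. \<Sum>x\<in>F. c x * m x y) = (\<Sum>x\<in>F. c x * pair g (m x))"
  using fF
proof (induction F rule: finite_induct)
  case empty
  have B': "fun_subspace B'" using r unfolding rkbs_def banach_fun_space_def by blast
  then have z: "(\<lambda>_. 0) \<in> B'" unfolding fun_subspace_def by blast
  have sc: "\<forall>c. \<forall>h\<in>B'. pair g (\<lambda>y. c * h y) = c * pair g h" using r g unfolding rkbs_def by blast
  show ?case using sc[rule_format, where c=0 and h="\<lambda>_. 0"] z by simp
next
  case (insert a F)
  have B': "fun_subspace B'" using r unfolding rkbs_def banach_fun_space_def by blast
  have sF: "(\<lambda>y. \<Sum>x\<in>F. c x * m x y) \<in> B'"
    using insert(1)
  proof (induction F rule: finite_induct)
    case empty then show ?case using B' unfolding fun_subspace_def by simp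
  next
    case (insert b F)
    have cb: "(\<lambda>y. c b * m b y) \<in> B'" using B' m unfolding fun_subspace_def by blast
    have ad: "\<forall>f\<in>B'. \<forall>g\<in>B'. (\<lambda>y. f y + g y) \<in> B'" using B' unfolding fun_subspace_def by blast
    show ?case using insert ad[rule_format, OF cb insert(3)] by simp
  qed
  have ca: "(\<lambda>y. c a * m a y) \<in> B'" using B' m unfolding fun_subspace_def by blast
  have ad: "\<forall>h\<in>B'. \<forall>h'\<in>B'. pair g (\<lambda>y. h y + h' y) = pair g h + pair g h'"
    using r g unfolding rkbs_def by blast
  have "pair g (\<lambda>y. \<Sum>x\<in>insert a F. c x * m x y) = pair g (\<lambda>y. c a * m a y + (\<Sum>x\<in>F. c x * m x y))"
    using insert by simp
  also have "\<dots> = pair g (\<lambda>y. c a * m a y) + pair g (\<lambda>y. \<Sum>x\<in>F. c x * m x y)"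
    using ad[rule_format, OF ca sF] by simp
  also have "pair g (\<lambda>y. c a * m a y) = c a * pair g (m a)"
    using r g m unfolding rkbs_def by blast
  finally show ?case using insert by simp
qed

theorem proposition2:
  fixes B B' :: "('x \<Rightarrow> complex) set"
    and nB nB' :: "('x \<Rightarrow> complex) \<Rightarrow> real"
    and pair :: "('x \<Rightarrow> complex) \<Rightarrow> ('x \<Rightarrow> complex) \<Rightarrow> complex"
    and k :: "'x \<Rightarrow> 'x \<Rightarrow> complex"
    and \<phi> :: "real \<Rightarrow> 'x \<Rightarrow> 'x"
  assumes "rkbs B nB B' nB' pair k"
    and "kernel_lin_indep k"
    and "semiflow \<phi>"
  shows "\<forall>t\<ge>0.
     \<comment> \<open>well-definedness: a linear extension exists and is unique on the span\<close>
     (\<exists>K. linear_op_on (kspan k) K \<and> (\<forall>x. K (k x) = k (\<phi> t x))) \<and>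
     (\<forall>K K'. linear_op_on (kspan k) K \<and> (\<forall>x. K (k x) = k (\<phi> t x)) \<and>
             linear_op_on (kspan k) K' \<and> (\<forall>x. K' (k x) = k (\<phi> t x))
             \<longrightarrow> (\<forall>h\<in>kspan k. K h = K' h)) \<and>
     \<comment> \<open>the adjoint is defined and equals the Koopman operator\<close>
     pairing_dense B pair (kspan k) \<and>
     (\<forall>K. linear_op_on (kspan k) K \<and> (\<forall>x. K (k x) = k (\<phi> t x)) \<longrightarrow>
        adjoint_dom B pair (kspan k) K = koopman_dom B \<phi> t \<and>
        (\<forall>g\<in>koopman_dom B \<phi> t. adjoint B pair (kspan k) K g = koopman \<phi> t g))"
proof (intro allI impI)
  fix t :: real
  note r = assms(1) and li = assms(2)
  have kin: "\<forall>x. k x \<in> B'" using r unfolding rkbs_def by (elim conjE) assumption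
  have repro: "\<forall>g\<in>B. \<forall>x. g x = pair g (k x)" using r unfolding rkbs_def by (elim conjE) assumption
  have kx: "k x = (\<lambda>y. \<Sum>z\<in>{x}. (\<lambda>_. 1) z * k z y)" for x by simp
  have e1: "\<exists>K. linear_op_on (kspan k) K \<and> (\<forall>x. K (k x) = k (\<phi> t x))"
  proof (intro exI conjI allI)
    show "linear_op_on (kspan k) (Kop k (\<lambda>x. k (\<phi> t x)))" by (rule Kop_linear[OF li])
    fix x
    show "Kop k (\<lambda>x. k (\<phi> t x)) (k x) = k (\<phi> t x)"
      using Kop_rep[OF li, of "{x}" "\<lambda>x. k (\<phi> t x)" "\<lambda>_. 1"] by simp
  qed
  have e2: "\<forall>K K'. linear_op_on (kspan k) K \<and> (\<forall>x. K (k x) = k (\<phi> t x)) \<and>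
             linear_op_on (kspan k) K' \<and> (\<forall>x. K' (k x) = k (\<phi> t x))
             \<longrightarrow> (\<forall>h\<in>kspan k. K h = K' h)"
  proof (intro allI impI ballI)
    fix K K' h
    assume a: "linear_op_on (kspan k) K \<and> (\<forall>x. K (k x) = k (\<phi> t x)) \<and>
             linear_op_on (kspan k) K' \<and> (\<forall>x. K' (k x) = k (\<phi> t x))" and "h \<in> kspan k"
    then obtain F c where F: "finite F" "h = (\<lambda>y. \<Sum>x\<in>F. c x * k x y)" unfolding kspan_def by blast
    show "K h = K' h" using F lin_sum[OF _ F(1), where K=K and c=c] lin_sum[OF _ F(1), where K=K' and c=c] a by simp
  qed
  have e3: "pairing_dense B pair (kspan k)"
    unfolding pairing_dense_def
  proof (intro ballI impI)
    fix g assume g: "g \<in> B" and h: "\<forall>h\<in>kspan k. pair g h = 0"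
    show "g = (\<lambda>_. 0)"
    proof
      fix x
      have kk: "k x \<in> kspan k" unfolding kspan_def
        by (rule CollectI, rule exI[of _ "{x}"], rule exI[of _ "\<lambda>_. 1"]) auto
      have "g x = pair g (k x)" by (rule repro[rule_format, OF g])
      also have "\<dots> = 0" using h kk by blast
      finally show "g x = 0" .
    qed
  qed
  have e4: "\<forall>K. linear_op_on (kspan k) K \<and> (\<forall>x. K (k x) = k (\<phi> t x)) \<longrightarrow>
        adjoint_dom B pair (kspan k) K = koopman_dom B \<phi> t \<and>
        (\<forall>g\<in>koopman_dom B \<phi> t. adjoint B pair (kspan k) K g = koopman \<phi> t g)"
  proof (intro allI impI conjI)
  fix K
  assume a: "linear_op_on (kspan k) K \<and> (\<forall>x. K (k x) = k (\<phi> t x))"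
  have kspan_k: "k x \<in> kspan k" for x unfolding kspan_def
    by (rule CollectI, rule exI[of _ "{x}"], rule exI[of _ "\<lambda>_. 1"]) auto
  have uniq: "z = g \<circ> \<phi> t" if "g \<in> B" "z \<in> B" "\<forall>h\<in>kspan k. pair g (K h) = pair z h" for g z
  proof
    fix x
    have "z x = pair z (k x)" by (rule repro[rule_format, OF that(2)])
    also have "\<dots> = pair g (K (k x))" using that kspan_k by simp
    also have "\<dots> = g (\<phi> t x)" using a repro[rule_format, OF that(1), of "\<phi> t x"] by simp
    finally show "z x = (g \<circ> \<phi> t) x" by simp
  qed
  have good: "\<forall>h\<in>kspan k. pair g (K h) = pair (g \<circ> \<phi> t) h" if "g \<in> B" "g \<circ> \<phi> t \<in> B" for g
  proof
    fix h assume "h \<in> kspan k"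
    then obtain F c where F: "finite F" "h = (\<lambda>y. \<Sum>x\<in>F. c x * k x y)" unfolding kspan_def by blast
    have "pair g (K h) = pair g (\<lambda>y. \<Sum>x\<in>F. c x * k (\<phi> t x) y)"
      using F lin_sum[OF _ F(1), where K=K and c=c] a by simp
    also have "\<dots> = (\<Sum>x\<in>F. c x * pair g (k (\<phi> t x)))"
      by (rule pair_sum[OF r that(1) F(1)]) (use kin in blast)
    also have "\<dots> = (\<Sum>x\<in>F. c x * pair (g \<circ> \<phi> t) (k x))"
    proof (rule sum.cong[OF refl])
      fix x
      have "pair g (k (\<phi> t x)) = g (\<phi> t x)" by (rule repro[rule_format, OF that(1), symmetric])
      also have "\<dots> = (g \<circ> \<phi> t) x" by simp
      also have "\<dots> = pair (g \<circ> \<phi> t) (k x)" by (rule repro[rule_format, OF that(2)])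
      finally show "c x * pair g (k (\<phi> t x)) = c x * pair (g \<circ> \<phi> t) (k x)" by simp
    qed
    also have "\<dots> = pair (g \<circ> \<phi> t) h"
      using F pair_sum[OF r that(2) F(1) kin, of c] by simp
    finally show "pair g (K h) = pair (g \<circ> \<phi> t) h" .
  qed
  show "adjoint_dom B pair (kspan k) K = koopman_dom B \<phi> t"
    unfolding adjoint_dom_def koopman_dom_def
  proof (intro set_eqI iffI)
    fix g assume "g \<in> {g \<in> B. \<exists>z\<in>B. \<forall>h\<in>kspan k. pair g (K h) = pair z h}"
    then obtain z where gz: "g \<in> B" "z \<in> B" "\<forall>h\<in>kspan k. pair g (K h) = pair z h" by blast
    have "z = g \<circ> \<phi> t" by (rule uniq[OF gz])
    then show "g \<in> {g \<in> B. g \<circ> \<phi> t \<in> B}" using gz by simp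
  next
    fix g assume "g \<in> {g \<in> B. g \<circ> \<phi> t \<in> B}"
    then have gg: "g \<in> B" "g \<circ> \<phi> t \<in> B" by auto
    show "g \<in> {g \<in> B. \<exists>z\<in>B. \<forall>h\<in>kspan k. pair g (K h) = pair z h}"
      using gg good[OF gg] by blast
  qed
  show "\<forall>g\<in>koopman_dom B \<phi> t. adjoint B pair (kspan k) K g = koopman \<phi> t g"
  proof
    fix g assume "g \<in> koopman_dom B \<phi> t"
    then have g: "g \<in> B" "g \<circ> \<phi> t \<in> B" unfolding koopman_dom_def by auto
    have "(THE z. z \<in> B \<and> (\<forall>h\<in>kspan k. pair g (K h) = pair z h)) = g \<circ> \<phi> t"
    proof (rule the_equality)
      show "g \<circ> \<phi> t \<in> B \<and> (\<forall>h\<in>kspan k. pair g (K h) = pair (g \<circ> \<phi> t) h)"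
        using g good[OF g] by simp
    next
      fix z assume "z \<in> B \<and> (\<forall>h\<in>kspan k. pair g (K h) = pair z h)"
      then show "z = g \<circ> \<phi> t" using uniq[OF g(1)] by blast
    qed
    then show "adjoint B pair (kspan k) K g = koopman \<phi> t g"
      unfolding adjoint_def koopman_def by simp
  qed
  qed
  from e1 e2 e3 e4 show "\<comment> \<open>well-definedness: a linear extension exists and is unique on the span\<close>
     (\<exists>K. linear_op_on (kspan k) K \<and> (\<forall>x. K (k x) = k (\<phi> t x))) \<and>
     (\<forall>K K'. linear_op_on (kspan k) K \<and> (\<forall>x. K (k x) = k (\<phi> t x)) \<and>
             linear_op_on (kspan k) K' \<and> (\<forall>x. K' (k x) = k (\<phi> t x))
             \<longrightarrow> (\<forall>h\<in>kspan k. K h = K' h)) \<and>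
     \<comment> \<open>the adjoint is defined and equals the Koopman operator\<close>
     pairing_dense B pair (kspan k) \<and>
     (\<forall>K. linear_op_on (kspan k) K \<and> (\<forall>x. K (k x) = k (\<phi> t x)) \<longrightarrow>
        adjoint_dom B pair (kspan k) K = koopman_dom B \<phi> t \<and>
        (\<forall>g\<in>koopman_dom B \<phi> t. adjoint B pair (kspan k) K g = koopman \<phi> t g))"
    by (intro conjI e1 e2 e3 e4)
qed

end
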